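(* Let $S$ be a countable discrete inverse semigroup with identity and $\alpha\colon S\to\mathcal I(X)$ a representation. The following are equivalent: (1) $X$ is $S$-domain measurable; (2) $X$ is not $S$-paradoxical; (3) $X$ is $S$-domain F\o lner.
   Context: Inverse semigroup: each $s$ has a unique $s^*$ with $ss^*s=s$, $s^*ss^*=s^*$. A representation is a unital homomorphism $\alpha\colon S\to\mathcal I(X)$ into the inverse semigroup of partial bijections of $X$; $D_{s^*s}$ denotes the domain of $\alpha_s$, and $\alpha_s\colon D_{s^*s}\to D_{ss^*}$ is a bijection. Measures are finitely additive maps $\mathcal P(X)\to[0,\infty]$. For $A\subseteq X$: $A$ is $S$-domain measurable if some measure $\mu$ has $\mu(A)=1$ and $\mu(B)=\mu(\alpha_s(B))$ for all $s\in S$, $B\subseteq D_{s^*s}$; $A$ is $S$-domain F\o lner if there are finite non-empty $F_n\subseteq A$ with $|\alpha_s(F_n\cap D_{s^*s})\setminus F_n|/|F_n|\to0$ for all $s$; $A$ is $S$-paradoxical if there are $A_i,B_j\subseteq X$, $s_i,t_j\in S$ ($i\le n$, $j\le m$) with $A_i\subseteq D_{s_i^*s_i}$, $B_j\subseteq D_{t_j^*t_j}$ and $A=\bigsqcup_i\alpha_{s_i}(A_i)=\bigsqcup_j\alpha_{t_j}(B_j)\supseteq A_1\sqcup\dots\sqcup A_n\sqcup B_1\sqcup\dots\sqcup B_m$. *)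

theory Defs
  imports "HOL-Analysis.Analysis"
begin

definition inverse_monoid :: "'s set \<Rightarrow> ('s \<Rightarrow> 's \<Rightarrow> 's) \<Rightarrow> 's \<Rightarrow> bool" where
  "inverse_monoid S m e \<longleftrightarrow>
     (\<forall>a\<in>S. \<forall>b\<in>S. m a b \<in> S) \<and>
     (\<forall>a\<in>S. \<forall>b\<in>S. \<forall>c\<in>S. m (m a b) c = m a (m b c)) \<and>
     e \<in> S \<and> (\<forall>a\<in>S. m e a = a \<and> m a e = a) \<and>
     (\<forall>s\<in>S. \<exists>!t. t \<in> S \<and> m (m s t) s = s \<and> m (m t s) t = t)"

definition partial_bij :: "'x set \<Rightarrow> ('x \<Rightarrow> 'x option) \<Rightarrow> bool" where
  "partial_bij X f \<longleftrightarrow> dom f \<subseteq> X \<and> ran f \<subseteq> X \<and> inj_on f (dom f)"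

definition id_on :: "'x set \<Rightarrow> ('x \<Rightarrow> 'x option)" where
  "id_on X = (\<lambda>x. if x \<in> X then Some x else None)"

text \<open>Unital representation \<alpha> : S \<rightarrow> I(X); product in I(X) is composition (first apply t, then s).\<close>
definition representation ::
  "'s set \<Rightarrow> ('s \<Rightarrow> 's \<Rightarrow> 's) \<Rightarrow> 's \<Rightarrow> 'x set \<Rightarrow> ('s \<Rightarrow> 'x \<Rightarrow> 'x option) \<Rightarrow> bool" where
  "representation S m e X \<alpha> \<longleftrightarrow>
     (\<forall>s\<in>S. partial_bij X (\<alpha> s)) \<and>
     (\<forall>s\<in>S. \<forall>t\<in>S. \<alpha> (m s t) = \<alpha> s \<circ>\<^sub>m \<alpha> t) \<and>
     \<alpha> e = id_on X"

text \<open>Image of B under the partial map f (used for B within the domain of f).\<close>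
definition pimg :: "('x \<Rightarrow> 'x option) \<Rightarrow> 'x set \<Rightarrow> 'x set" where
  "pimg f B = (\<lambda>x. the (f x)) ` B"

definition fin_add_measure :: "'x set \<Rightarrow> ('x set \<Rightarrow> ennreal) \<Rightarrow> bool" where
  "fin_add_measure X \<mu> \<longleftrightarrow> \<mu> {} = 0 \<and>
     (\<forall>A B. A \<subseteq> X \<longrightarrow> B \<subseteq> X \<longrightarrow> A \<inter> B = {} \<longrightarrow> \<mu> (A \<union> B) = \<mu> A + \<mu> B)"

definition domain_measurable ::
  "'s set \<Rightarrow> 'x set \<Rightarrow> ('s \<Rightarrow> 'x \<Rightarrow> 'x option) \<Rightarrow> 'x set \<Rightarrow> bool" where
  "domain_measurable S X \<alpha> A \<longleftrightarrow>
     (\<exists>\<mu>. fin_add_measure X \<mu> \<and> \<mu> A = 1 \<and>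
        (\<forall>s\<in>S. \<forall>B. B \<subseteq> dom (\<alpha> s) \<longrightarrow> \<mu> B = \<mu> (pimg (\<alpha> s) B)))"

definition domain_folner ::
  "'s set \<Rightarrow> ('s \<Rightarrow> 'x \<Rightarrow> 'x option) \<Rightarrow> 'x set \<Rightarrow> bool" where
  "domain_folner S \<alpha> A \<longleftrightarrow>
     (\<exists>F :: nat \<Rightarrow> 'x set. (\<forall>n. finite (F n) \<and> F n \<noteq> {} \<and> F n \<subseteq> A) \<and>
        (\<forall>s\<in>S. (\<lambda>n. real (card (pimg (\<alpha> s) (F n \<inter> dom (\<alpha> s)) - F n)) / real (card (F n)))
                   \<longlonglongrightarrow> 0))"

definition paradoxical ::
  "'s set \<Rightarrow> 'x set \<Rightarrow> ('s \<Rightarrow> 'x \<Rightarrow> 'x option) \<Rightarrow> 'x set \<Rightarrow> bool" where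
  "paradoxical S X \<alpha> A \<longleftrightarrow>
     (\<exists>(n::nat) (m::nat) (As :: nat \<Rightarrow> 'x set) (Bs :: nat \<Rightarrow> 'x set) (ss :: nat \<Rightarrow> 's) (ts :: nat \<Rightarrow> 's).
        (\<forall>i<n. ss i \<in> S \<and> As i \<subseteq> X \<and> As i \<subseteq> dom (\<alpha> (ss i))) \<and>
        (\<forall>j<m. ts j \<in> S \<and> Bs j \<subseteq> X \<and> Bs j \<subseteq> dom (\<alpha> (ts j))) \<and>
        A = (\<Union>i<n. pimg (\<alpha> (ss i)) (As i)) \<and>
        (\<forall>i<n. \<forall>i'<n. i \<noteq> i' \<longrightarrow> pimg (\<alpha> (ss i)) (As i) \<inter> pimg (\<alpha> (ss i')) (As i') = {}) \<and>
        A = (\<Union>j<m. pimg (\<alpha> (ts j)) (Bs j)) \<and>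
        (\<forall>j<m. \<forall>j'<m. j \<noteq> j' \<longrightarrow> pimg (\<alpha> (ts j)) (Bs j) \<inter> pimg (\<alpha> (ts j')) (Bs j') = {}) \<and>
        (\<Union>i<n. As i) \<union> (\<Union>j<m. Bs j) \<subseteq> A \<and>
        (\<forall>i<n. \<forall>i'<n. i \<noteq> i' \<longrightarrow> As i \<inter> As i' = {}) \<and>
        (\<forall>j<m. \<forall>j'<m. j \<noteq> j' \<longrightarrow> Bs j \<inter> Bs j' = {}) \<and>
        (\<forall>i<n. \<forall>j<m. As i \<inter> Bs j = {}))"

end

theory Submission
  imports Defs
begin



lemma hall_fin:
  fixes F :: "'l set" and N :: "'l \<Rightarrow> 'r set"
  assumes "finite F" "\<forall>v\<in>F. finite (N v)" "\<forall>G\<subseteq>F. card G \<le> card (\<Union>(N ` G))"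
  shows "\<exists>f. inj_on f F \<and> (\<forall>v\<in>F. f v \<in> N v)"
  using assms
proof (induction "card F" arbitrary: F N rule: less_induct)
  case less
  note fin = less.prems(1) and finN = less.prems(2) and hall = less.prems(3)
  show ?case
  proof (cases "F = {}")
    case True then show ?thesis by auto
  next
    case Fne: False
    have finU: "finite (\<Union>(N ` G))" if "G \<subseteq> F" for G
      using that fin finN by (meson finite_UN_I finite_subset subsetD)
    show ?thesis
    proof (cases "\<exists>G. G \<subseteq> F \<and> G \<noteq> {} \<and> G \<noteq> F \<and> card (\<Union>(N ` G)) = card G")
      case True
      then obtain G where G: "G \<subseteq> F" "G \<noteq> {}" "G \<noteq> F" "card (\<Union>(N ` G)) = card G" by blast
      define M where "M = \<Union>(N ` G)"
      have finG: "finite G" using G(1) fin finite_subset by blast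
      have "card G < card F" using G fin by (meson psubsetI psubset_card_mono)
      moreover have "\<forall>v\<in>G. finite (N v)" using G(1) finN by auto
      moreover have "\<forall>G'\<subseteq>G. card G' \<le> card (\<Union>(N ` G'))" using G(1) hall by auto
      ultimately obtain g where g: "inj_on g G" "\<forall>v\<in>G. g v \<in> N v"
        using less.hyps finG by blast
      define H where "H = F - G"
      define N2 where "N2 = (\<lambda>v. N v - M)"
      have finH: "finite H" using fin H_def by auto
      have "H \<subset> F" unfolding H_def using G by blast
      then have "card H < card F" using fin by (simp add: psubset_card_mono)
      moreover have "\<forall>v\<in>H. finite (N2 v)" using finN H_def N2_def by auto
      moreover have "\<forall>H'\<subseteq>H. card H' \<le> card (\<Union>(N2 ` H'))"
      proof (intro allI impI)
        fix H' assume H': "H' \<subseteq> H"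
        have fH': "finite H'" using H' finH finite_subset by blast
        have e1: "\<Union>(N ` (H' \<union> G)) = \<Union>(N2 ` H') \<union> M" unfolding N2_def M_def by auto
        have d: "\<Union>(N2 ` H') \<inter> M = {}" unfolding N2_def by auto
        have fM: "finite M" unfolding M_def using finU G(1) by auto
        have fU2: "finite (\<Union>(N2 ` H'))" using finU[of H'] H' H_def N2_def
          by (meson Diff_subset UN_mono finite_subset subset_refl Diff_subset[of F G] subset_trans)
        have "H' \<union> G \<subseteq> F" using H' G(1) H_def by auto
        then have "card (H' \<union> G) \<le> card (\<Union>(N ` (H' \<union> G)))" using hall by blast
        also have "\<dots> = card (\<Union>(N2 ` H')) + card M" using e1 d fM fU2 card_Un_disjoint by metis
        finally have "card (H' \<union> G) \<le> card (\<Union>(N2 ` H')) + card M" .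
        moreover have "card (H' \<union> G) = card H' + card G"
          using fH' finG H' H_def by (intro card_Un_disjoint) auto
        ultimately show "card H' \<le> card (\<Union>(N2 ` H'))" using G(4) M_def by simp
      qed
      ultimately obtain h where h: "inj_on h H" "\<forall>v\<in>H. h v \<in> N2 v"
        using less.hyps finH by blast
      define f where "f = (\<lambda>v. if v \<in> G then g v else h v)"
      have "inj_on f F"
      proof (rule inj_onI)
        fix x y assume xy: "x \<in> F" "y \<in> F" "f x = f y"
        show "x = y"
        proof (cases "x \<in> G"; cases "y \<in> G")
          assume "x \<in> G" "y \<in> G" then show ?thesis using xy g(1) f_def by (auto dest: inj_onD)
        next
          assume "x \<notin> G" "y \<notin> G" then show ?thesis using xy h(1) f_def H_def by (auto dest: inj_onD)
        next
          assume a: "x \<in> G" "y \<notin> G"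
          then have "f x \<in> M" using g f_def M_def by auto
          moreover have "y \<in> H" using a xy H_def by auto
          then have "h y \<notin> M" using h(2) N2_def by blast
          then have "f y \<notin> M" using a f_def by simp
          ultimately show ?thesis using xy by simp
        next
          assume a: "x \<notin> G" "y \<in> G"
          then have "f y \<in> M" using g f_def M_def by auto
          moreover have "x \<in> H" using a xy H_def by auto
          then have "h x \<notin> M" using h(2) N2_def by blast
          then have "f x \<notin> M" using a f_def by simp
          ultimately show ?thesis using xy by simp
        qed
      qed
      moreover have "\<forall>v\<in>F. f v \<in> N v" using g h f_def H_def N2_def by auto
      ultimately show ?thesis by blast
    next
      case False
      then have strict: "card G < card (\<Union>(N ` G))" if "G \<subseteq> F" "G \<noteq> {}" "G \<noteq> F" for G
        using hall that by (metis le_neq_implies_less)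
      obtain v where v: "v \<in> F" using Fne by blast
      have "{v} \<subseteq> F" using v by auto
      then have "card {v} \<le> card (\<Union>(N ` {v}))" using hall by blast
      then have "card {v} \<le> card (N v)" by simp
      then have "N v \<noteq> {}" by auto
      then obtain w where w: "w \<in> N v" by blast
      define F' where "F' = F - {v}"
      define N' where "N' = (\<lambda>u. N u - {w})"
      have finF': "finite F'" using fin F'_def by auto
      have "card F' < card F" using F'_def fin v by (metis card_Diff1_less)
      moreover have "\<forall>u\<in>F'. finite (N' u)" using finN F'_def N'_def by auto
      moreover have "\<forall>H\<subseteq>F'. card H \<le> card (\<Union>(N' ` H))"
      proof (intro allI impI)
        fix H assume H: "H \<subseteq> F'"
        show "card H \<le> card (\<Union>(N' ` H))"
        proof (cases "H = {}")
          case True then show ?thesis by simp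
        next
          case False
          have HF: "H \<subseteq> F" "H \<noteq> F" using H F'_def v by auto
          have "card H < card (\<Union>(N ` H))" using strict HF False by blast
          moreover have "\<Union>(N' ` H) = \<Union>(N ` H) - {w}" unfolding N'_def by auto
          moreover have "finite (\<Union>(N ` H))" using finU HF by auto
          moreover have "card (\<Union>(N ` H)) - card {w} \<le> card (\<Union>(N ` H) - {w})"
            by (rule diff_card_le_card_Diff) simp
          ultimately show ?thesis by simp
        qed
      qed
      ultimately obtain f' where f': "inj_on f' F'" "\<forall>u\<in>F'. f' u \<in> N' u"
        using less.hyps finF' by blast
      define f where "f = f'(v := w)"
      have "inj_on f F"
      proof (rule inj_onI)
        fix x y assume xy: "x \<in> F" "y \<in> F" "f x = f y"
        show "x = y"
        proof (cases "x = v"; cases "y = v")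
          assume "x \<noteq> v" "y \<noteq> v" then show ?thesis using xy f' F'_def f_def by (auto dest: inj_onD)
        next
          assume "x = v" "y \<noteq> v" then show ?thesis using xy f' F'_def f_def N'_def by fastforce
        next
          assume "x \<noteq> v" "y = v" then show ?thesis using xy f' F'_def f_def N'_def by fastforce
        qed simp
      qed
      moreover have "\<forall>u\<in>F. f u \<in> N u" using f' w F'_def N'_def f_def by auto
      ultimately show ?thesis by blast
    qed
  qed
qed




definition fip :: "'i set set \<Rightarrow> bool" where
  "fip U \<longleftrightarrow> (\<forall>F. finite F \<and> F \<subseteq> U \<longrightarrow> \<Inter>F \<noteq> {})"

lemma chain_fin: "finite F \<Longrightarrow> C \<noteq> {} \<Longrightarrow> chain\<^sub>\<subseteq> C \<Longrightarrow> F \<subseteq> \<Union>C \<Longrightarrow> \<exists>U\<in>C. F \<subseteq> U"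
proof (induction F rule: finite_induct)
  case empty then show ?case by auto
next
  case (insert x F)
  then obtain U where U: "U \<in> C" "F \<subseteq> U" by auto
  obtain V where V: "V \<in> C" "x \<in> V" using insert by auto
  have "U \<subseteq> V \<or> V \<subseteq> U" using insert(5) U V unfolding chain_subset_def by auto
  then show ?case using U V by auto
qed

lemma ultra_exists:
  assumes "fip B"
  shows "\<exists>U. B \<subseteq> U \<and> fip U \<and> (\<forall>A. A \<in> U \<or> - A \<in> U)"
proof -
  define Z where "Z = {U. B \<subseteq> U \<and> fip U}"
  have "\<forall>C\<in>chains Z. \<exists>U\<in>Z. \<forall>X\<in>C. X \<subseteq> U"
  proof
    fix C assume C: "C \<in> chains Z"
    show "\<exists>U\<in>Z. \<forall>X\<in>C. X \<subseteq> U"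
    proof (cases "C = {}")
      case True then show ?thesis using assms Z_def by auto
    next
      case False
      have "fip (\<Union>C)" unfolding fip_def
      proof (intro allI impI)
        fix F assume F: "finite F \<and> F \<subseteq> \<Union>C"
        have "\<exists>U\<in>C. F \<subseteq> U"
          using chain_fin[of F C] F False C unfolding chains_def by auto
        then obtain U where "U \<in> C" "F \<subseteq> U" by blast
        then show "\<Inter>F \<noteq> {}" using C F unfolding chains_def Z_def fip_def by auto
      qed
      moreover have "B \<subseteq> \<Union>C" using False C unfolding chains_def Z_def by auto
      ultimately show ?thesis unfolding Z_def by auto
    qed
  qed
  then obtain M where M: "M \<in> Z" "\<forall>X\<in>Z. M \<subseteq> X \<longrightarrow> X = M" using Zorn_Lemma2 by blast
  have "A \<in> M \<or> - A \<in> M" for A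
  proof (rule ccontr)
    assume na: "\<not> (A \<in> M \<or> - A \<in> M)"
    have "\<not> fip (insert A M)"
    proof
      assume "fip (insert A M)"
      then have "insert A M \<in> Z" using M(1) Z_def by auto
      then show False using M na by auto
    qed
    then obtain F1 where F1: "finite F1" "F1 \<subseteq> insert A M" "\<Inter>F1 = {}" unfolding fip_def by blast
    have "\<not> fip (insert (-A) M)"
    proof
      assume "fip (insert (-A) M)"
      then have "insert (-A) M \<in> Z" using M(1) Z_def by auto
      then show False using M na by auto
    qed
    then obtain F2 where F2: "finite F2" "F2 \<subseteq> insert (-A) M" "\<Inter>F2 = {}" unfolding fip_def by blast
    define G where "G = (F1 - {A}) \<union> (F2 - {-A})"
    have "finite G" "G \<subseteq> M" using F1 F2 G_def by auto
    then have "\<Inter>G \<noteq> {}" using M(1) Z_def fip_def by auto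
    then obtain x where x: "x \<in> \<Inter>G" by blast
    show False
    proof (cases "x \<in> A")
      case True
      then have "x \<in> \<Inter>F1" using x G_def by auto
      then show False using F1 by auto
    next
      case False
      then have "x \<in> \<Inter>F2" using x G_def by auto
      then show False using F2 by auto
    qed
  qed
  then show ?thesis using M(1) Z_def by auto
qed

locale ultra =
  fixes U :: "'i set set"
  assumes fipU: "fip U" and compl: "\<And>A. A \<in> U \<or> - A \<in> U"
begin

lemma nonempty: "A \<in> U \<Longrightarrow> A \<noteq> {}"
proof -
  assume a: "A \<in> U"
  have "finite {A} \<and> {A} \<subseteq> U" using a by simp
  then have "\<Inter>{A} \<noteq> {}" using fipU unfolding fip_def by blast
  then show ?thesis by simp
qed

lemma two_nonempty: "A \<in> U \<Longrightarrow> B \<in> U \<Longrightarrow> A \<inter> B \<noteq> {}"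
proof -
  assume a: "A \<in> U" "B \<in> U"
  have "finite {A, B} \<and> {A, B} \<subseteq> U" using a by simp
  then have "\<Inter>{A, B} \<noteq> {}" using fipU unfolding fip_def by blast
  then show ?thesis by simp
qed

lemma mono: "A \<in> U \<Longrightarrow> A \<subseteq> B \<Longrightarrow> B \<in> U"
  using two_nonempty[of A "-B"] compl[of B] by auto

lemma inter: "A \<in> U \<Longrightarrow> B \<in> U \<Longrightarrow> A \<inter> B \<in> U"
proof (rule ccontr)
  assume a: "A \<in> U" "B \<in> U" "A \<inter> B \<notin> U"
  then have c: "- (A \<inter> B) \<in> U" using compl by blast
  have f: "finite {A, B, - (A \<inter> B)}" by simp
  have s: "{A, B, - (A \<inter> B)} \<subseteq> U" using a(1,2) c by blast
  have "\<Inter>{A, B, - (A \<inter> B)} \<noteq> {}" using fipU[unfolded fip_def, rule_format, OF conjI[OF f s]] .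
  moreover have "\<Inter>{A, B, - (A \<inter> B)} = {}" by blast
  ultimately show False by blast
qed

lemma univ: "A \<in> U \<Longrightarrow> UNIV \<in> U" using mono by blast

lemma partition:
  assumes "finite W" "A \<in> U" "A \<subseteq> (\<Union>w\<in>W. P w)"
  shows "\<exists>w\<in>W. P w \<in> U"
proof (rule ccontr)
  assume "\<not> (\<exists>w\<in>W. P w \<in> U)"
  then have "\<forall>w\<in>W. - P w \<in> U" using compl by blast
  then have "insert A ((\<lambda>w. - P w) ` W) \<subseteq> U" using assms by auto
  moreover have "finite (insert A ((\<lambda>w. - P w) ` W))" using assms by auto
  ultimately have "\<Inter>(insert A ((\<lambda>w. - P w) ` W)) \<noteq> {}" using fipU fip_def by blast
  then show False using assms(3) by auto
qed

end




lemma hall_inf: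
  fixes V :: "'l set" and N :: "'l \<Rightarrow> 'r set"
  assumes finN: "\<forall>v\<in>V. finite (N v)"
    and hall: "\<forall>G. finite G \<and> G \<subseteq> V \<longrightarrow> card G \<le> card (\<Union>(N ` G))"
  shows "\<exists>f. inj_on f V \<and> (\<forall>v\<in>V. f v \<in> N v)"
proof -
  have "\<forall>G. \<exists>g. finite G \<and> G \<subseteq> V \<longrightarrow> inj_on g G \<and> (\<forall>v\<in>G. g v \<in> N v)"
  proof
    fix G
    show "\<exists>g. finite G \<and> G \<subseteq> V \<longrightarrow> inj_on g G \<and> (\<forall>v\<in>G. g v \<in> N v)"
    proof (cases "finite G \<and> G \<subseteq> V")
      case True
      have "\<forall>v\<in>G. finite (N v)" using True finN by auto
      moreover have "\<forall>G'\<subseteq>G. card G' \<le> card (\<Union>(N ` G'))"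
        using True hall by (meson finite_subset order_trans)
      ultimately show ?thesis using hall_fin[of G N] True by blast
    qed blast
  qed
  then obtain g where g: "\<And>G. finite G \<Longrightarrow> G \<subseteq> V \<Longrightarrow> inj_on (g G) G \<and> (\<forall>v\<in>G. g G v \<in> N v)"
    by metis
  define C where "C v = {G. finite G \<and> G \<subseteq> V \<and> v \<in> G}" for v
  have "fip (C ` V)"
    unfolding fip_def
  proof (intro allI impI)
    fix FF assume FF: "finite FF \<and> FF \<subseteq> C ` V"
    then obtain W where W: "W \<subseteq> V" "finite W" "FF = C ` W" by (meson finite_subset_image)
    have "W \<in> \<Inter>FF" using W C_def by auto
    then show "\<Inter>FF \<noteq> {}" by auto
  qed
  then obtain U where U: "C ` V \<subseteq> U" "fip U" "\<forall>A. A \<in> U \<or> -A \<in> U" using ultra_exists by blast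
  interpret ultra U using U by unfold_locales auto
  have "\<forall>v\<in>V. \<exists>w\<in>N v. {G. g G v = w} \<in> U"
  proof
    fix v assume v: "v \<in> V"
    have "C v \<in> U" using U v by auto
    moreover have "C v \<subseteq> (\<Union>w\<in>N v. {G. g G v = w})" using g C_def by auto
    ultimately show "\<exists>w\<in>N v. {G. g G v = w} \<in> U" using partition finN v by blast
  qed
  then obtain f where f: "\<forall>v\<in>V. f v \<in> N v \<and> {G. g G v = f v} \<in> U" by metis
  have "inj_on f V"
  proof (rule inj_onI)
    fix x y assume xy: "x \<in> V" "y \<in> V" "f x = f y"
    show "x = y"
    proof (rule ccontr)
      assume ne: "x \<noteq> y"
      have "C x \<in> U" "C y \<in> U" using U xy by auto
      moreover have "{G. g G x = f x} \<in> U" "{G. g G y = f y} \<in> U" using f xy by auto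
      ultimately have "{G. g G x = f x} \<inter> {G. g G y = f y} \<inter> (C x \<inter> C y) \<in> U" using inter by metis
      then obtain G where G: "g G x = f x" "g G y = f y" "G \<in> C x" "G \<in> C y" using nonempty by blast
      then have "inj_on (g G) G" "x \<in> G" "y \<in> G" using g C_def by auto
      then have "g G x \<noteq> g G y" using ne by (meson inj_onD)
      then show False using G xy by simp
    qed
  qed
  then show ?thesis using f by blast
qed

context ultra
begin

definition islim :: "('i \<Rightarrow> real) \<Rightarrow> real \<Rightarrow> bool" where
  "islim a r \<longleftrightarrow> (\<forall>\<epsilon>>0. {n. \<bar>a n - r\<bar> < \<epsilon>} \<in> U)"

lemma UNIV_in: "UNIV \<in> U" using compl[of UNIV] nonempty by auto

lemma islim_unique: "islim a r \<Longrightarrow> islim a r' \<Longrightarrow> r = r'"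
proof (rule ccontr)
  assume a: "islim a r" "islim a r'" "r \<noteq> r'"
  define \<epsilon> where "\<epsilon> = \<bar>r - r'\<bar> / 2"
  have "\<epsilon> > 0" using a \<epsilon>_def by auto
  then have "{n. \<bar>a n - r\<bar> < \<epsilon>} \<inter> {n. \<bar>a n - r'\<bar> < \<epsilon>} \<noteq> {}"
    using a two_nonempty islim_def by auto
  then obtain n where "\<bar>a n - r\<bar> < \<epsilon>" "\<bar>a n - r'\<bar> < \<epsilon>" by auto
  then show False using \<epsilon>_def by (auto simp: abs_if split: if_splits)
qed

lemma islim_exists:
  assumes "\<forall>n. \<bar>a n\<bar> \<le> M"
  shows "\<exists>r. islim a r"
proof (rule ccontr)
  assume "\<not> (\<exists>r. islim a r)"
  then have "\<forall>r. \<exists>\<epsilon>>0. {n. \<bar>a n - r\<bar> < \<epsilon>} \<notin> U" unfolding islim_def by auto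
  then obtain e where e: "\<forall>r. e r > 0 \<and> {n. \<bar>a n - r\<bar> < e r} \<notin> U" by metis
  have "{-M..M} \<subseteq> (\<Union>r\<in>{-M..M}. ball r (e r))" using e by force
  then obtain K where K: "K \<subseteq> {-M..M}" "finite K" "{-M..M} \<subseteq> (\<Union>r\<in>K. ball r (e r))"
    using compactE_image[of "{-M..M}" "{-M..M}" "\<lambda>r. ball r (e r)"] by auto
  have "UNIV \<subseteq> (\<Union>r\<in>K. {n. \<bar>a n - r\<bar> < e r})"
  proof
    fix n :: 'i
    have "a n \<in> {-M..M}" using assms[rule_format, of n] by auto
    then obtain r where "r \<in> K" "a n \<in> ball r (e r)" using K by blast
    then show "n \<in> (\<Union>r\<in>K. {n. \<bar>a n - r\<bar> < e r})" by (auto simp: dist_real_def abs_minus_commute)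
  qed
  then obtain r where "r \<in> K" "{n. \<bar>a n - r\<bar> < e r} \<in> U" using partition[OF K(2) UNIV_in] by blast
  then show False using e by auto
qed

lemma islim_add: "islim a r \<Longrightarrow> islim b r' \<Longrightarrow> islim (\<lambda>n. a n + b n) (r + r')"
  unfolding islim_def
proof (intro allI impI)
  fix \<epsilon> :: real assume A: "\<forall>\<epsilon>>0. {n. \<bar>a n - r\<bar> < \<epsilon>} \<in> U" and B: "\<forall>\<epsilon>>0. {n. \<bar>b n - r'\<bar> < \<epsilon>} \<in> U" and "\<epsilon> > 0"
  then have h: "\<epsilon>/2 > 0" by simp
  have "{n. \<bar>a n - r\<bar> < \<epsilon>/2} \<in> U" using A h by blast
  moreover have "{n. \<bar>b n - r'\<bar> < \<epsilon>/2} \<in> U" using B h by blast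
  ultimately have "{n. \<bar>a n - r\<bar> < \<epsilon>/2} \<inter> {n. \<bar>b n - r'\<bar> < \<epsilon>/2} \<in> U" using inter by blast
  moreover have "{n. \<bar>a n - r\<bar> < \<epsilon>/2} \<inter> {n. \<bar>b n - r'\<bar> < \<epsilon>/2} \<subseteq> {n. \<bar>a n + b n - (r + r')\<bar> < \<epsilon>}"
    by (auto simp: abs_if split: if_splits)
  ultimately show "{n. \<bar>a n + b n - (r + r')\<bar> < \<epsilon>} \<in> U" using mono by blast
qed

lemma islim_const: "islim (\<lambda>n. c) c"
  unfolding islim_def using UNIV_in by simp

lemma islim_nonneg: "islim a r \<Longrightarrow> \<forall>n. a n \<ge> 0 \<Longrightarrow> r \<ge> 0"
proof (rule ccontr)
  assume a: "islim a r" "\<forall>n. a n \<ge> 0" "\<not> r \<ge> 0"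
  then have "{n. \<bar>a n - r\<bar> < - r} \<in> U" unfolding islim_def by auto
  moreover have "\<not> \<bar>a n - r\<bar> < - r" for n using a(2)[rule_format, of n] a(3) by (auto simp: abs_if)
  then have "{n. \<bar>a n - r\<bar> < - r} = {}" by auto
  ultimately show False using nonempty by blast
qed

lemma islim_close:
  assumes "islim a r" "\<forall>\<epsilon>>0. {n. \<bar>a n - b n\<bar> < \<epsilon>} \<in> U"
  shows "islim b r"
  unfolding islim_def
proof (intro allI impI)
  fix \<epsilon> :: real assume "\<epsilon> > 0"
  then have h: "\<epsilon>/2 > 0" by simp
  have "{n. \<bar>a n - r\<bar> < \<epsilon>/2} \<in> U" using assms(1) h unfolding islim_def by blast
  moreover have "{n. \<bar>a n - b n\<bar> < \<epsilon>/2} \<in> U" using assms(2) h by blast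
  ultimately have "{n. \<bar>a n - r\<bar> < \<epsilon>/2} \<inter> {n. \<bar>a n - b n\<bar> < \<epsilon>/2} \<in> U" using inter by blast
  moreover have "{n. \<bar>a n - r\<bar> < \<epsilon>/2} \<inter> {n. \<bar>a n - b n\<bar> < \<epsilon>/2} \<subseteq> {n. \<bar>b n - r\<bar> < \<epsilon>}"
    by (auto simp: abs_if split: if_splits)
  ultimately show "{n. \<bar>b n - r\<bar> < \<epsilon>} \<in> U" using mono by blast
qed

end




definition img :: "('x \<Rightarrow> 'x option) \<Rightarrow> 'x set \<Rightarrow> 'x set" where
  "img f B = {y. \<exists>x\<in>B. f x = Some y}"

lemma pimg_img: "pimg f (B \<inter> dom f) = img f B"
proof (rule set_eqI)
  fix y
  show "y \<in> pimg f (B \<inter> dom f) \<longleftrightarrow> y \<in> img f B"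
  proof
    assume "y \<in> pimg f (B \<inter> dom f)"
    then obtain x where x: "x \<in> B" "x \<in> dom f" "y = the (f x)" unfolding pimg_def by blast
    then have "f x = Some y" by auto
    then show "y \<in> img f B" unfolding img_def using x by blast
  next
    assume "y \<in> img f B"
    then obtain x where x: "x \<in> B" "f x = Some y" unfolding img_def by blast
    then have "x \<in> B \<inter> dom f" "y = the (f x)" by auto
    then show "y \<in> pimg f (B \<inter> dom f)" unfolding pimg_def by blast
  qed
qed

lemma pimg_img2: "B \<subseteq> dom f \<Longrightarrow> pimg f B = img f B"
  using pimg_img[of f B] by (simp add: Int_absorb2)

locale setting =
  fixes S :: "'s set" and m :: "'s \<Rightarrow> 's \<Rightarrow> 's" and e :: 's
    and X :: "'x set" and \<alpha> :: "'s \<Rightarrow> 'x \<Rightarrow> 'x option"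
  assumes im: "inverse_monoid S m e" and rep: "representation S m e X \<alpha>"
begin

lemma eS: "e \<in> S" using im unfolding inverse_monoid_def by auto
lemma mS: "s \<in> S \<Longrightarrow> t \<in> S \<Longrightarrow> m s t \<in> S" using im unfolding inverse_monoid_def by auto

lemma pb: "s \<in> S \<Longrightarrow> partial_bij X (\<alpha> s)" using rep unfolding representation_def by auto

lemma dom_X: "s \<in> S \<Longrightarrow> \<alpha> s x = Some y \<Longrightarrow> x \<in> X"
  using pb[of s] unfolding partial_bij_def by auto

lemma ran_X: "s \<in> S \<Longrightarrow> \<alpha> s x = Some y \<Longrightarrow> y \<in> X"
  using pb[of s] unfolding partial_bij_def ran_def by auto

lemma inj: "s \<in> S \<Longrightarrow> \<alpha> s x = Some y \<Longrightarrow> \<alpha> s x' = Some y \<Longrightarrow> x = x'"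
proof -
  assume a: "s \<in> S" "\<alpha> s x = Some y" "\<alpha> s x' = Some y"
  have i: "inj_on (\<alpha> s) (dom (\<alpha> s))" using pb[OF a(1)] unfolding partial_bij_def by blast
  have "x \<in> dom (\<alpha> s)" "x' \<in> dom (\<alpha> s)" using a by auto
  moreover have "\<alpha> s x = \<alpha> s x'" using a by simp
  ultimately show "x = x'" using inj_onD[OF i] by blast
qed

lemma comp_eq: "s \<in> S \<Longrightarrow> t \<in> S \<Longrightarrow> \<alpha> (m s t) = \<alpha> s \<circ>\<^sub>m \<alpha> t"
  using rep unfolding representation_def by blast

lemma comp: "s \<in> S \<Longrightarrow> t \<in> S \<Longrightarrow> \<alpha> t x = Some y \<Longrightarrow> \<alpha> s y = Some z \<Longrightarrow> \<alpha> (m s t) x = Some z"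
  by (simp add: comp_eq map_comp_def)

lemma comp_rev: "s \<in> S \<Longrightarrow> t \<in> S \<Longrightarrow> \<alpha> (m s t) x = Some z \<Longrightarrow> \<exists>y. \<alpha> t x = Some y \<and> \<alpha> s y = Some z"
  by (simp add: comp_eq map_comp_Some_iff)

lemma e_act: "\<alpha> e x = (if x \<in> X then Some x else None)"
proof -
  have "\<alpha> e = id_on X" using rep unfolding representation_def by blast
  then show ?thesis unfolding id_on_def by simp
qed

lemma inv: "s \<in> S \<Longrightarrow> \<exists>t\<in>S. \<forall>x y. \<alpha> s x = Some y \<longrightarrow> \<alpha> t y = Some x"
proof -
  assume s: "s \<in> S"
  then obtain t where t: "t \<in> S" "m (m s t) s = s" using im unfolding inverse_monoid_def by blast
  have "\<forall>x y. \<alpha> s x = Some y \<longrightarrow> \<alpha> t y = Some x"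
  proof (intro allI impI)
    fix x y assume xy: "\<alpha> s x = Some y"
    have "\<alpha> (m (m s t) s) x = Some y" using t(2) xy by simp
    then obtain z where z: "\<alpha> s x = Some z" "\<alpha> (m s t) z = Some y" using comp_rev[OF mS[OF s t(1)] s] by blast
    then have zy: "z = y" using xy by simp
    obtain w where w: "\<alpha> t y = Some w" "\<alpha> s w = Some y" using comp_rev[OF s t(1)] z zy by blast
    then have "w = x" using inj[OF s] xy by blast
    then show "\<alpha> t y = Some x" using w by simp
  qed
  then show ?thesis using t(1) by blast
qed

end

lemma fam_add: "fin_add_measure X \<mu> \<Longrightarrow> A \<subseteq> X \<Longrightarrow> B \<subseteq> X \<Longrightarrow> A \<inter> B = {} \<Longrightarrow> \<mu> (A \<union> B) = \<mu> A + \<mu> B"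
  unfolding fin_add_measure_def by blast

lemma fam_sum:
  fixes n :: nat
  assumes "fin_add_measure X \<mu>" "\<forall>i<n. Y i \<subseteq> X" "\<forall>i<n. \<forall>j<n. i \<noteq> j \<longrightarrow> Y i \<inter> Y j = {}"
  shows "\<mu> (\<Union>i<n. Y i) = (\<Sum>i<n. \<mu> (Y i))"
  using assms(2,3)
proof (induction n)
  case 0 then show ?case using assms(1) unfolding fin_add_measure_def by simp
next
  case (Suc n)
  have "(\<Union>i<Suc n. Y i) = (\<Union>i<n. Y i) \<union> Y n" by (auto simp: lessThan_Suc)
  moreover have "(\<Union>i<n. Y i) \<inter> Y n = {}"
  proof -
    have "Y i \<inter> Y n = {}" if "i < n" for i
      using Suc.prems(2)[rule_format, of i n] that by simp
    then show ?thesis by blast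
  qed
  moreover have "(\<Union>i<n. Y i) \<subseteq> X" using Suc.prems(1) less_SucI by blast
  moreover have "Y n \<subseteq> X" using Suc.prems(1) by blast
  ultimately have "\<mu> (\<Union>i<Suc n. Y i) = \<mu> (\<Union>i<n. Y i) + \<mu> (Y n)"
    using fam_add[OF assms(1)] by presburger
  then show ?case using Suc by simp
qed

lemma fam_mono:
  assumes "fin_add_measure X \<mu>" "A \<subseteq> B" "B \<subseteq> X"
  shows "\<mu> A \<le> \<mu> B"
proof -
  have "B = A \<union> (B - A)" using assms by auto
  moreover have "A \<subseteq> X" "B - A \<subseteq> X" "A \<inter> (B - A) = {}" using assms by auto
  ultimately have "\<mu> B = \<mu> A + \<mu> (B - A)" using fam_add[OF assms(1)] by metis
  then show ?thesis using le_iff_add by blast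
qed

lemma measurable_not_paradoxical:
  fixes S :: "'s set" and X :: "'x set" and \<alpha> :: "'s \<Rightarrow> 'x \<Rightarrow> 'x option"
  assumes "domain_measurable S X \<alpha> X"
  shows "\<not> paradoxical S X \<alpha> X"
proof
  assume "paradoxical S X \<alpha> X"
  then obtain n k :: nat and As Bs :: "nat \<Rightarrow> 'x set" and ss ts :: "nat \<Rightarrow> 's" where P:
        "(\<forall>i<n. ss i \<in> S \<and> As i \<subseteq> X \<and> As i \<subseteq> dom (\<alpha> (ss i)))"
        "(\<forall>j<k. ts j \<in> S \<and> Bs j \<subseteq> X \<and> Bs j \<subseteq> dom (\<alpha> (ts j)))"
        "X = (\<Union>i<n. pimg (\<alpha> (ss i)) (As i))"
        "(\<forall>i<n. \<forall>i'<n. i \<noteq> i' \<longrightarrow> pimg (\<alpha> (ss i)) (As i) \<inter> pimg (\<alpha> (ss i')) (As i') = {})"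
        "X = (\<Union>j<k. pimg (\<alpha> (ts j)) (Bs j))"
        "(\<forall>j<k. \<forall>j'<k. j \<noteq> j' \<longrightarrow> pimg (\<alpha> (ts j)) (Bs j) \<inter> pimg (\<alpha> (ts j')) (Bs j') = {})"
        "(\<Union>i<n. As i) \<union> (\<Union>j<k. Bs j) \<subseteq> X"
        "(\<forall>i<n. \<forall>i'<n. i \<noteq> i' \<longrightarrow> As i \<inter> As i' = {})"
        "(\<forall>j<k. \<forall>j'<k. j \<noteq> j' \<longrightarrow> Bs j \<inter> Bs j' = {})"
        "(\<forall>i<n. \<forall>j<k. As i \<inter> Bs j = {})"
    unfolding paradoxical_def apply (elim exE conjE) apply (rule that) by assumption+
  from assms obtain \<mu> where mu: "fin_add_measure X \<mu>" "\<mu> X = 1"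
      "\<forall>s\<in>S. \<forall>B. B \<subseteq> dom (\<alpha> s) \<longrightarrow> \<mu> B = \<mu> (pimg (\<alpha> s) B)"
    unfolding domain_measurable_def apply (elim exE conjE) apply (rule that) by assumption+
  have sub1: "\<forall>i<n. pimg (\<alpha> (ss i)) (As i) \<subseteq> X" using P(3) by blast
  have "\<mu> X = (\<Sum>i<n. \<mu> (pimg (\<alpha> (ss i)) (As i)))"
    using fam_sum[OF mu(1) sub1 P(4)] P(3) by simp
  also have "\<dots> = (\<Sum>i<n. \<mu> (As i))"
  proof (rule sum.cong)
    fix i assume "i \<in> {..<n}"
    then have "ss i \<in> S" "As i \<subseteq> dom (\<alpha> (ss i))" using P(1) by auto
    then show "\<mu> (pimg (\<alpha> (ss i)) (As i)) = \<mu> (As i)" using mu(3)[rule_format, of "ss i" "As i"] by simp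
  qed simp
  also have "\<dots> = \<mu> (\<Union>i<n. As i)" using fam_sum[OF mu(1), of n As] P(1) P(8) by simp
  finally have A1: "\<mu> (\<Union>i<n. As i) = 1" using mu(2) by simp
  have sub2: "\<forall>j<k. pimg (\<alpha> (ts j)) (Bs j) \<subseteq> X" using P(5) by blast
  have "\<mu> X = (\<Sum>j<k. \<mu> (pimg (\<alpha> (ts j)) (Bs j)))"
    using fam_sum[OF mu(1) sub2 P(6)] P(5) by simp
  also have "\<dots> = (\<Sum>i<k. \<mu> (Bs i))"
  proof (rule sum.cong)
    fix i assume "i \<in> {..<k}"
    then have "ts i \<in> S" "Bs i \<subseteq> dom (\<alpha> (ts i))" using P(2) by auto
    then show "\<mu> (pimg (\<alpha> (ts i)) (Bs i)) = \<mu> (Bs i)" using mu(3)[rule_format, of "ts i" "Bs i"] by simp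
  qed simp
  also have "\<dots> = \<mu> (\<Union>j<k. Bs j)" using fam_sum[OF mu(1), of k Bs] P(2) P(9) by simp
  finally have B1: "\<mu> (\<Union>j<k. Bs j) = 1" using mu(2) by simp
  have "\<mu> ((\<Union>i<n. As i) \<union> (\<Union>j<k. Bs j)) = \<mu> (\<Union>i<n. As i) + \<mu> (\<Union>j<k. Bs j)"
  proof (rule fam_add[OF mu(1)])
    show "(\<Union>i<n. As i) \<subseteq> X" "(\<Union>j<k. Bs j) \<subseteq> X" using P(7) by auto
    show "(\<Union>i<n. As i) \<inter> (\<Union>j<k. Bs j) = {}" using P(10) by blast
  qed
  also have "\<dots> = 2" using A1 B1 by simp
  finally have "2 \<le> \<mu> X" using fam_mono[OF mu(1) P(7)] by simp
  then show False using mu(2) by simp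
qed




lemma nat_ultra: "\<exists>U::nat set set. ultra U \<and> (\<forall>N. {N..} \<in> U)"
proof -
  define T where "T k = {k::nat..}" for k
  have "fip (range T)"
    unfolding fip_def
  proof (intro allI impI)
    fix FF assume FF: "finite FF \<and> FF \<subseteq> range T"
    then obtain K where K: "finite K" "FF = T ` K" by (meson finite_subset_image)
    have "Max (insert 0 K) \<in> Y" if Y: "Y \<in> FF" for Y
    proof -
      obtain k where k: "k \<in> K" "Y = T k" using K(2) Y by blast
      have "k \<le> Max (insert 0 K)" using K(1) k(1) by simp
      then show ?thesis using k(2) unfolding T_def by simp
    qed
    then have "Max (insert 0 K) \<in> \<Inter>FF" by (rule InterI)
    then show "\<Inter>FF \<noteq> {}" by auto
  qed
  then have "\<exists>U. range T \<subseteq> U \<and> fip U \<and> (\<forall>A. A \<in> U \<or> -A \<in> U)" by (rule ultra_exists)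
  then obtain U where U: "range T \<subseteq> U" "fip U" "\<forall>A. A \<in> U \<or> -A \<in> U"
    apply (elim exE conjE) apply (rule that) by assumption+
  have "ultra U" unfolding ultra_def using U(2,3) by blast
  moreover have "\<forall>N. {N..} \<in> U" using U(1) T_def by auto
  ultimately show ?thesis by blast
qed

context setting
begin

lemma img_finite: "finite F \<Longrightarrow> finite (img f F)"
  using pimg_img[of f F] unfolding pimg_def by (metis finite_Int finite_imageI)

lemma count1:
  assumes s: "s \<in> S" and fin: "finite F" and B: "B \<subseteq> dom (\<alpha> s)"
  shows "card (B \<inter> F) \<le> card (img (\<alpha> s) B \<inter> F) + card (img (\<alpha> s) F - F)"
proof -
  define h where "h = (\<lambda>x. the (\<alpha> s x))"
  have hx: "\<alpha> s x = Some (h x)" if "x \<in> B" for x using that B h_def by auto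
  have "inj_on h (B \<inter> F)"
  proof (rule inj_onI)
    fix x x' assume a: "x \<in> B \<inter> F" "x' \<in> B \<inter> F" "h x = h x'"
    then have "\<alpha> s x = Some (h x)" "\<alpha> s x' = Some (h x)" using hx by auto
    then show "x = x'" using inj[OF s] by blast
  qed
  then have "card (B \<inter> F) = card (h ` (B \<inter> F))" by (simp add: card_image)
  also have "\<dots> \<le> card ((img (\<alpha> s) B \<inter> F) \<union> (img (\<alpha> s) F - F))"
  proof (rule card_mono)
    show "finite ((img (\<alpha> s) B \<inter> F) \<union> (img (\<alpha> s) F - F))" using fin img_finite by auto
    show "h ` (B \<inter> F) \<subseteq> (img (\<alpha> s) B \<inter> F) \<union> (img (\<alpha> s) F - F)"
      using hx unfolding img_def by auto
  qed
  also have "\<dots> \<le> card (img (\<alpha> s) B \<inter> F) + card (img (\<alpha> s) F - F)" by (rule card_Un_le)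
  finally show ?thesis .
qed

lemma count2:
  assumes s: "s \<in> S" and t: "t \<in> S" and st: "\<forall>x y. \<alpha> s x = Some y \<longrightarrow> \<alpha> t y = Some x"
    and fin: "finite F"
  shows "card (img (\<alpha> s) B \<inter> F) \<le> card (B \<inter> F) + card (img (\<alpha> t) F - F)"
proof -
  define h where "h = (\<lambda>y. the (\<alpha> t y))"
  have hy: "\<exists>x\<in>B. \<alpha> s x = Some y \<and> \<alpha> t y = Some (h y) \<and> h y = x" if yB: "y \<in> img (\<alpha> s) B" for y
  proof -
    obtain x where "x \<in> B" "\<alpha> s x = Some y" using yB unfolding img_def by blast
    moreover then have "\<alpha> t y = Some x" using st by blast
    ultimately show ?thesis using h_def by auto
  qed
  have "inj_on h (img (\<alpha> s) B \<inter> F)"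
  proof (rule inj_onI)
    fix y y' assume a: "y \<in> img (\<alpha> s) B \<inter> F" "y' \<in> img (\<alpha> s) B \<inter> F" "h y = h y'"
    then have "\<alpha> t y = Some (h y)" "\<alpha> t y' = Some (h y)" using hy by (metis IntD1)+
    then show "y = y'" using inj[OF t] by blast
  qed
  then have "card (img (\<alpha> s) B \<inter> F) = card (h ` (img (\<alpha> s) B \<inter> F))" by (simp add: card_image)
  also have "\<dots> \<le> card ((B \<inter> F) \<union> (img (\<alpha> t) F - F))"
  proof (rule card_mono)
    show "finite ((B \<inter> F) \<union> (img (\<alpha> t) F - F))" using fin img_finite by auto
    show "h ` (img (\<alpha> s) B \<inter> F) \<subseteq> (B \<inter> F) \<union> (img (\<alpha> t) F - F)"
    proof
      fix x assume "x \<in> h ` (img (\<alpha> s) B \<inter> F)"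
      then obtain y where y: "y \<in> img (\<alpha> s) B" "y \<in> F" "x = h y" by blast
      then obtain x' where "x' \<in> B" "\<alpha> t y = Some (h y)" "h y = x'" using hy by blast
      then show "x \<in> (B \<inter> F) \<union> (img (\<alpha> t) F - F)" using y unfolding img_def by auto
    qed
  qed
  also have "\<dots> \<le> card (B \<inter> F) + card (img (\<alpha> t) F - F)" by (rule card_Un_le)
  finally show ?thesis .
qed

lemma folner_measurable:
  assumes "domain_folner S \<alpha> X"
  shows "domain_measurable S X \<alpha> X"
proof -
  obtain F :: "nat \<Rightarrow> 'x set" where F: "\<forall>n. finite (F n) \<and> F n \<noteq> {} \<and> F n \<subseteq> X"
    and lim: "\<forall>s\<in>S. (\<lambda>n. real (card (pimg (\<alpha> s) (F n \<inter> dom (\<alpha> s)) - F n)) / real (card (F n))) \<longlonglongrightarrow> 0"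
    using assms unfolding domain_folner_def by blast
  define r where "r s n = real (card (img (\<alpha> s) (F n) - F n)) / real (card (F n))" for s n
  have rlim: "r s \<longlonglongrightarrow> 0" if "s \<in> S" for s
    using lim that unfolding r_def pimg_img by blast
  have rpos: "r s n \<ge> 0" for s n unfolding r_def by simp
  obtain U :: "nat set set" where uU: "ultra U" and tails: "\<forall>N. {N..} \<in> U"
    using nat_ultra apply (elim exE conjE) apply (rule that) by assumption+
  note mono = ultra.mono[OF uU]
  note islim_exists = ultra.islim_exists[OF uU]
  note islim_unique = ultra.islim_unique[OF uU]
  note islim_const = ultra.islim_const[OF uU]
  note islim_add = ultra.islim_add[OF uU]
  note islim_nonneg = ultra.islim_nonneg[OF uU]
  note islim_close = ultra.islim_close[OF uU]
  have evU: "{n. P n} \<in> U" if ev: "eventually P sequentially" for P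
  proof -
    obtain N where "\<forall>n\<ge>N. P n" using ev eventually_sequentially by blast
    then have "{N..} \<subseteq> {n. P n}" by auto
    then show ?thesis by (rule mono[OF tails[rule_format, of N]])
  qed
  define a where "a B n = real (card (B \<inter> F n)) / real (card (F n))" for B n
  have cardpos: "real (card (F n)) > 0" for n using F by (simp add: card_gt_0_iff)
  have abnd: "\<bar>a B n\<bar> \<le> 1" for B n
  proof -
    have "card (B \<inter> F n) \<le> card (F n)" using F by (simp add: card_mono)
    then show ?thesis unfolding a_def using cardpos[of n] by simp
  qed
  have apos: "a B n \<ge> 0" for B n unfolding a_def by simp
  define \<nu> where "\<nu> B = (THE r. ultra.islim U (a B) r)" for B
  have nu: "ultra.islim U (a B) (\<nu> B)" for B
  proof -
    obtain r where r: "ultra.islim U (a B) r" using islim_exists[of "a B" 1] abnd by blast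
    show ?thesis unfolding \<nu>_def
    proof (rule theI)
      show "ultra.islim U (a B) r" by (fact r)
      fix x assume "ultra.islim U (a B) x"
      then show "x = r" using islim_unique r by blast
    qed
  qed
  have nu_eq: "\<nu> B = c" if "ultra.islim U (a B) c" for B c using nu that islim_unique by blast
  have nupos: "\<nu> B \<ge> 0" for B using islim_nonneg[OF nu] apos by blast
  define \<mu> where "\<mu> B = ennreal (\<nu> B)" for B
  have "fin_add_measure X \<mu>"
    unfolding fin_add_measure_def
  proof (intro conjI allI impI)
    have "a {} = (\<lambda>n. 0)" unfolding a_def by auto
    then have "\<nu> {} = 0" using nu_eq islim_const by metis
    then show "\<mu> {} = 0" unfolding \<mu>_def by simp
  next
    fix A B assume AB: "A \<subseteq> X" "B \<subseteq> X" "A \<inter> B = {}"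
    have "a (A \<union> B) n = a A n + a B n" for n
    proof -
      have "(A \<union> B) \<inter> F n = (A \<inter> F n) \<union> (B \<inter> F n)" by auto
      moreover have "card ((A \<inter> F n) \<union> (B \<inter> F n)) = card (A \<inter> F n) + card (B \<inter> F n)"
        using F AB by (intro card_Un_disjoint) auto
      ultimately show ?thesis unfolding a_def by (simp add: add_divide_distrib)
    qed
    then have "a (A \<union> B) = (\<lambda>n. a A n + a B n)" by auto
    then have "\<nu> (A \<union> B) = \<nu> A + \<nu> B" using nu_eq islim_add[OF nu nu] by metis
    then show "\<mu> (A \<union> B) = \<mu> A + \<mu> B" unfolding \<mu>_def using nupos by (simp add: ennreal_plus)
  qed
  moreover have "\<mu> X = 1"
  proof -
    have "a X = (\<lambda>n. 1)" unfolding a_def using F cardpos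
      by (auto simp: Int_absorb1)
    then have "\<nu> X = 1" using nu_eq islim_const by metis
    then show ?thesis unfolding \<mu>_def by simp
  qed
  moreover have "\<forall>s\<in>S. \<forall>B. B \<subseteq> dom (\<alpha> s) \<longrightarrow> \<mu> B = \<mu> (pimg (\<alpha> s) B)"
  proof (intro ballI allI impI)
    fix s B assume s: "s \<in> S" and B: "B \<subseteq> dom (\<alpha> s)"
    obtain t where t: "t \<in> S" "\<forall>x y. \<alpha> s x = Some y \<longrightarrow> \<alpha> t y = Some x" using inv[OF s] by blast
    have bound: "\<bar>a B n - a (img (\<alpha> s) B) n\<bar> \<le> r s n + r t n" for n
    proof -
      have c1: "card (B \<inter> F n) \<le> card (img (\<alpha> s) B \<inter> F n) + card (img (\<alpha> s) (F n) - F n)"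
        using count1[OF s _ B] F by blast
      have c2: "card (img (\<alpha> s) B \<inter> F n) \<le> card (B \<inter> F n) + card (img (\<alpha> t) (F n) - F n)"
        using count2[OF s t(1) t(2)] F by blast
      define c where "c = real (card (F n))"
      have cp: "c > 0" using cardpos c_def by simp
      have "\<bar>real (card (B \<inter> F n)) - real (card (img (\<alpha> s) B \<inter> F n))\<bar>
            \<le> real (card (img (\<alpha> s) (F n) - F n)) + real (card (img (\<alpha> t) (F n) - F n))"
        using c1 c2 by linarith
      then have "\<bar>real (card (B \<inter> F n)) - real (card (img (\<alpha> s) B \<inter> F n))\<bar> / c
            \<le> (real (card (img (\<alpha> s) (F n) - F n)) + real (card (img (\<alpha> t) (F n) - F n))) / c"
        using cp by (simp add: divide_right_mono)
      then show ?thesis unfolding a_def r_def c_def[symmetric]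
        by (simp add: add_divide_distrib diff_divide_distrib[symmetric] abs_div_pos[OF cp])
    qed
    have "\<forall>\<epsilon>>0. {n. \<bar>a B n - a (img (\<alpha> s) B) n\<bar> < \<epsilon>} \<in> U"
    proof (intro allI impI)
      fix \<epsilon> :: real assume e: "\<epsilon> > 0"
      have "(\<lambda>n. r s n + r t n) \<longlonglongrightarrow> 0 + 0" using rlim[OF s] rlim[OF t(1)] by (rule tendsto_add)
      then have "eventually (\<lambda>n. \<bar>r s n + r t n - 0\<bar> < \<epsilon>) sequentially"
        using e by (simp add: tendsto_iff dist_real_def del: add_0_right)
      then have "eventually (\<lambda>n. \<bar>a B n - a (img (\<alpha> s) B) n\<bar> < \<epsilon>) sequentially"
        by (rule eventually_mono) (use bound in \<open>smt (verit)\<close>)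
      then show "{n. \<bar>a B n - a (img (\<alpha> s) B) n\<bar> < \<epsilon>} \<in> U" by (rule evU)
    qed
    then have "ultra.islim U (a (img (\<alpha> s) B)) (\<nu> B)" using islim_close[OF nu] by blast
    then have "\<nu> (img (\<alpha> s) B) = \<nu> B" using nu_eq by blast
    then show "\<mu> B = \<mu> (pimg (\<alpha> s) B)" unfolding \<mu>_def using pimg_img2[OF B] by simp
  qed
  ultimately show ?thesis unfolding domain_measurable_def by blast
qed

end




context setting
begin

lemma not_folner_K:
  assumes cS: "countable S" and nf: "\<not> domain_folner S \<alpha> X"
  shows "\<exists>K \<epsilon>. finite K \<and> K \<subseteq> S \<and> \<epsilon> > 0 \<and>
     (\<forall>F. finite F \<and> F \<noteq> {} \<and> F \<subseteq> X \<longrightarrow> (\<exists>s\<in>K. real (card (img (\<alpha> s) F - F)) > \<epsilon> * real (card F)))"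
proof (rule ccontr)
  assume na: "\<not> ?thesis"
  have ex: "\<exists>F. finite F \<and> F \<noteq> {} \<and> F \<subseteq> X \<and> (\<forall>s\<in>K. real (card (img (\<alpha> s) F - F)) \<le> \<epsilon> * real (card F))"
    if K: "finite K" "K \<subseteq> S" "\<epsilon> > 0" for K \<epsilon>
    using na K by (meson not_less)
  define enum where "enum = from_nat_into S"
  have Sne: "S \<noteq> {}" using eS by auto
  have renum: "range enum = S" unfolding enum_def using Sne cS by simp
  have "\<forall>n. \<exists>F. finite F \<and> F \<noteq> {} \<and> F \<subseteq> X \<and>
      (\<forall>s\<in>enum ` {..n}. real (card (img (\<alpha> s) F - F)) \<le> inverse (real (Suc n)) * real (card F))"
  proof
    fix n
    have "finite (enum ` {..n})" "enum ` {..n} \<subseteq> S" "inverse (real (Suc n)) > 0" using renum by auto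
    then show "\<exists>F. finite F \<and> F \<noteq> {} \<and> F \<subseteq> X \<and>
      (\<forall>s\<in>enum ` {..n}. real (card (img (\<alpha> s) F - F)) \<le> inverse (real (Suc n)) * real (card F))"
      by (rule ex)
  qed
  then obtain F where F: "\<forall>n. finite (F n) \<and> F n \<noteq> {} \<and> F n \<subseteq> X \<and>
      (\<forall>s\<in>enum ` {..n}. real (card (img (\<alpha> s) (F n) - F n)) \<le> inverse (real (Suc n)) * real (card (F n)))"
    by metis
  have "domain_folner S \<alpha> X"
    unfolding domain_folner_def
  proof (intro exI[of _ F] conjI ballI allI)
    fix n show "finite (F n)" "F n \<noteq> {}" "F n \<subseteq> X" using F by auto
  next
    fix s assume s: "s \<in> S"
    then obtain k where k: "s = enum k" using renum by blast
    define q where "q n = real (card (pimg (\<alpha> s) (F n \<inter> dom (\<alpha> s)) - F n)) / real (card (F n))" for n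
    have cp: "real (card (F n)) > 0" for n using F by (simp add: card_gt_0_iff)
    have "eventually (\<lambda>n. q n \<le> inverse (real (Suc n))) sequentially"
      unfolding eventually_sequentially
    proof (intro exI[of _ k] allI impI)
      fix n assume "k \<le> n"
      then have "s \<in> enum ` {..n}" using k by auto
      then have "real (card (img (\<alpha> s) (F n) - F n)) \<le> inverse (real (Suc n)) * real (card (F n))"
        using F by blast
      then show "q n \<le> inverse (real (Suc n))" unfolding q_def pimg_img
        using cp[of n] by (simp add: pos_divide_le_eq)
    qed
    moreover have "eventually (\<lambda>n. 0 \<le> q n) sequentially" unfolding q_def by simp
    ultimately have "q \<longlonglongrightarrow> 0"
      using tendsto_sandwich[of "\<lambda>n. 0" q sequentially "\<lambda>n. inverse (real (Suc n))" 0]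
        LIMSEQ_inverse_real_of_nat by auto
    then show "(\<lambda>n. real (card (pimg (\<alpha> s) (F n \<inter> dom (\<alpha> s)) - F n)) / real (card (F n))) \<longlonglongrightarrow> 0"
      unfolding q_def .
  qed
  then show False using nf by simp
qed

end



definition nbh :: "('s \<Rightarrow> 'x \<Rightarrow> 'x option) \<Rightarrow> 's set \<Rightarrow> 'x set \<Rightarrow> 'x set" where
  "nbh \<alpha> L F = (\<Union>t\<in>L. img (\<alpha> t) F)"

primrec lk :: "('s \<Rightarrow> 's \<Rightarrow> 's) \<Rightarrow> 's \<Rightarrow> 's set \<Rightarrow> nat \<Rightarrow> 's set" where
  "lk m e K0 0 = {e}"
| "lk m e K0 (Suc k) = (\<lambda>(s, t). m s t) ` (K0 \<times> lk m e K0 k)"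

context setting
begin

lemma img_e: "F \<subseteq> X \<Longrightarrow> img (\<alpha> e) F = F"
  unfolding img_def e_act by auto

lemma img_sub: "s \<in> S \<Longrightarrow> img (\<alpha> s) F \<subseteq> X"
  unfolding img_def using ran_X by blast

lemma nbh_sub: "L \<subseteq> S \<Longrightarrow> nbh \<alpha> L F \<subseteq> X"
  unfolding nbh_def using img_sub by blast

lemma nbh_fin: "finite L \<Longrightarrow> finite F \<Longrightarrow> finite (nbh \<alpha> L F)"
  unfolding nbh_def using img_finite by blast

lemma lk_sub: "K0 \<subseteq> S \<Longrightarrow> lk m e K0 k \<subseteq> S"
  by (induction k) (auto simp: eS intro!: mS)

lemma lk_fin: "finite K0 \<Longrightarrow> finite (lk m e K0 k)"
  by (induction k) auto

lemma nbh_comp: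
  assumes K0: "K0 \<subseteq> S"
  shows "nbh \<alpha> K0 (nbh \<alpha> (lk m e K0 k) F) \<subseteq> nbh \<alpha> (lk m e K0 (Suc k)) F"
proof
  fix y assume "y \<in> nbh \<alpha> K0 (nbh \<alpha> (lk m e K0 k) F)"
  then obtain s x' where s: "s \<in> K0" "x' \<in> nbh \<alpha> (lk m e K0 k) F" "\<alpha> s x' = Some y"
    unfolding nbh_def img_def by blast
  then obtain t x where t: "t \<in> lk m e K0 k" "x \<in> F" "\<alpha> t x = Some x'"
    unfolding nbh_def img_def by blast
  have "s \<in> S" "t \<in> S" using s(1) t(1) K0 lk_sub[OF K0] by auto
  then have "\<alpha> (m s t) x = Some y" using comp t(3) s(3) by blast
  moreover have "m s t \<in> lk m e K0 (Suc k)" using s(1) t(1) by force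
  ultimately show "y \<in> nbh \<alpha> (lk m e K0 (Suc k)) F" unfolding nbh_def img_def using t(2) by blast
qed

lemma expansion:
  assumes K: "finite K" "K \<subseteq> S" "\<epsilon> > 0"
    and H: "\<forall>F. finite F \<and> F \<noteq> {} \<and> F \<subseteq> X \<longrightarrow> (\<exists>s\<in>K. real (card (img (\<alpha> s) F - F)) > \<epsilon> * real (card F))"
  shows "\<exists>L. finite L \<and> L \<subseteq> S \<and> (\<forall>F. finite F \<and> F \<subseteq> X \<longrightarrow> 2 * card F \<le> card (nbh \<alpha> L F))"
proof -
  define K0 where "K0 = insert e K"
  have K0: "finite K0" "K0 \<subseteq> S" using K eS K0_def by auto
  have exp1: "(1 + \<epsilon>) * real (card F) \<le> real (card (nbh \<alpha> K0 F))" if FX: "finite F" "F \<subseteq> X" for F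
  proof (cases "F = {}")
    case True then show ?thesis by simp
  next
    case False
    then obtain s where s: "s \<in> K" "real (card (img (\<alpha> s) F - F)) > \<epsilon> * real (card F)"
      using H FX by blast
    have sub: "F \<union> (img (\<alpha> s) F - F) \<subseteq> nbh \<alpha> K0 F"
      unfolding nbh_def K0_def using img_e[OF FX(2)] s(1) by auto
    have "card (F \<union> (img (\<alpha> s) F - F)) = card F + card (img (\<alpha> s) F - F)"
      using FX img_finite by (intro card_Un_disjoint) auto
    moreover have "card (F \<union> (img (\<alpha> s) F - F)) \<le> card (nbh \<alpha> K0 F)"
      using sub nbh_fin[OF K0(1) FX(1)] by (rule card_mono[rotated])
    ultimately have "real (card F) + real (card (img (\<alpha> s) F - F)) \<le> real (card (nbh \<alpha> K0 F))"
      by linarith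
    then show ?thesis using s(2) by (simp add: distrib_right)
  qed
  have iter: "(1 + \<epsilon>) ^ k * real (card F) \<le> real (card (nbh \<alpha> (lk m e K0 k) F))"
    if "finite F" "F \<subseteq> X" for F k
  proof (induction k)
    case 0
    have "nbh \<alpha> (lk m e K0 0) F = F" unfolding nbh_def using img_e[OF that(2)] by simp
    then show ?case by simp
  next
    case (Suc k)
    define G where "G = nbh \<alpha> (lk m e K0 k) F"
    have G: "finite G" "G \<subseteq> X" unfolding G_def
      using nbh_fin[OF lk_fin[OF K0(1)] that(1)] nbh_sub[OF lk_sub[OF K0(2)]] by auto
    have "(1 + \<epsilon>) ^ Suc k * real (card F) = (1 + \<epsilon>) * ((1 + \<epsilon>) ^ k * real (card F))" by simp
    also have "\<dots> \<le> (1 + \<epsilon>) * real (card G)" using Suc K(3) G_def by (intro mult_left_mono) auto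
    also have "\<dots> \<le> real (card (nbh \<alpha> K0 G))" using exp1[OF G] .
    also have "\<dots> \<le> real (card (nbh \<alpha> (lk m e K0 (Suc k)) F))"
      using card_mono[OF nbh_fin[OF lk_fin[OF K0(1)] that(1)] nbh_comp[OF K0(2), of k F]] G_def by simp
    finally show ?case .
  qed
  obtain k where k: "2 < (1 + \<epsilon>) ^ k" using real_arch_pow[of "1 + \<epsilon>" 2] K(3) by auto
  have two: "2 * card F \<le> card (nbh \<alpha> (lk m e K0 k) F)" if "finite F" "F \<subseteq> X" for F
  proof -
    have "2 * real (card F) \<le> (1 + \<epsilon>) ^ k * real (card F)" using k by (intro mult_right_mono) auto
    also have "\<dots> \<le> real (card (nbh \<alpha> (lk m e K0 k) F))" using iter[OF that] .
    finally show ?thesis by linarith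
  qed
  show ?thesis
  proof (intro exI[of _ "lk m e K0 k"] conjI allI impI)
    show "finite (lk m e K0 k)" by (rule lk_fin[OF K0(1)])
    show "lk m e K0 k \<subseteq> S" by (rule lk_sub[OF K0(2)])
    fix F assume "finite F \<and> F \<subseteq> X"
    then show "2 * card F \<le> card (nbh \<alpha> (lk m e K0 k) F)" using two by simp
  qed
qed

end



context setting
begin

lemma expansion_paradoxical:
  assumes L: "finite L" "L \<subseteq> S"
    and exp: "\<forall>F. finite F \<and> F \<subseteq> X \<longrightarrow> 2 * card F \<le> card (nbh \<alpha> L F)"
  shows "paradoxical S X \<alpha> X"
proof -
  define V where "V = X \<times> (UNIV :: bool set)"
  define N where "N v = nbh \<alpha> L {fst v}" for v :: "'x \<times> bool"
  have finN: "\<forall>v\<in>V. finite (N v)" using nbh_fin L(1) N_def by auto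
  have hallc: "\<forall>G. finite G \<and> G \<subseteq> V \<longrightarrow> card G \<le> card (\<Union>(N ` G))"
  proof (intro allI impI)
    fix G assume G: "finite G \<and> G \<subseteq> V"
    define P where "P = fst ` G"
    have P: "finite P" "P \<subseteq> X" using G V_def P_def by auto
    have U: "\<Union>(N ` G) = nbh \<alpha> L P" unfolding N_def nbh_def img_def P_def by blast
    have "G \<subseteq> P \<times> (UNIV :: bool set)" unfolding P_def by force
    then have "card G \<le> card (P \<times> (UNIV :: bool set))" using P(1) by (intro card_mono) auto
    also have "\<dots> = 2 * card P" by (simp add: card_cartesian_product)
    also have "\<dots> \<le> card (nbh \<alpha> L P)" using exp P by blast
    finally show "card G \<le> card (\<Union>(N ` G))" using U by simp
  qed
  have "\<exists>f. inj_on f V \<and> (\<forall>v\<in>V. f v \<in> N v)" by (rule hall_inf[OF finN hallc])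
  then obtain \<phi> where \<phi>: "inj_on \<phi> V" "\<forall>v\<in>V. \<phi> v \<in> N v"
    apply (elim exE conjE) apply (rule that) by assumption+
  obtain ls where ls: "set ls = L" "distinct ls" using finite_distinct_list[OF L(1)] by blast
  define n where "n = length ls"
  have lsS: "ls ! i \<in> S" if "i < n" for i using that ls(1) L(2) n_def nth_mem by blast
  have ex_i: "\<exists>i. i < n \<and> \<alpha> (ls ! i) x = Some (\<phi> (x, b))" if xX: "x \<in> X" for x b
  proof -
    have "(x, b) \<in> V" using xX V_def by auto
    then have "\<phi> (x, b) \<in> nbh \<alpha> L {x}" using \<phi>(2) N_def by fastforce
    then obtain t where t: "t \<in> L" "\<alpha> t x = Some (\<phi> (x, b))" unfolding nbh_def img_def by blast
    then obtain i where "i < n" "ls ! i = t" using ls(1) n_def by (metis in_set_conv_nth)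
    then show ?thesis using t by blast
  qed
  define idx where "idx x b = (LEAST i. i < n \<and> \<alpha> (ls ! i) x = Some (\<phi> (x, b)))" for x b
  have idx: "idx x b < n \<and> \<alpha> (ls ! idx x b) x = Some (\<phi> (x, b))" if xX: "x \<in> X" for x b
    unfolding idx_def by (rule LeastI_ex[OF ex_i[OF xX]])
  define \<iota> where "\<iota> t = (SOME t'. t' \<in> S \<and> (\<forall>x y. \<alpha> t x = Some y \<longrightarrow> \<alpha> t' y = Some x))" for t
  have \<iota>: "\<iota> t \<in> S \<and> (\<forall>x y. \<alpha> t x = Some y \<longrightarrow> \<alpha> (\<iota> t) y = Some x)" if tS: "t \<in> S" for t
  proof -
    have "\<exists>t'. t' \<in> S \<and> (\<forall>x y. \<alpha> t x = Some y \<longrightarrow> \<alpha> t' y = Some x)" using inv[OF tS] by blast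
    then show ?thesis unfolding \<iota>_def by (rule someI_ex)
  qed
  define ss where "ss i = \<iota> (ls ! i)" for i
  define A where "A b i = {\<phi> (x, b) | x. x \<in> X \<and> idx x b = i}" for b i
  define Pc where "Pc b i = {x \<in> X. idx x b = i}" for b i
  have ssS: "ss i \<in> S" if "i < n" for i unfolding ss_def using \<iota>[OF lsS[OF that]] by (rule conjunct1)
  have AX: "A b i \<subseteq> X" for b i
  proof
    fix z assume "z \<in> A b i"
    then obtain x where x: "x \<in> X" "z = \<phi> (x, b)" unfolding A_def by blast
    then show "z \<in> X" using idx[OF x(1), of b] lsS ran_X by metis
  qed
  have Aback: "\<alpha> (ss i) z = Some x \<and> x \<in> X \<and> idx x b = i" if "z = \<phi> (x, b)" "x \<in> X" "idx x b = i" for z x b i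
  proof -
    have "i < n" "\<alpha> (ls ! i) x = Some z" using idx[OF that(2), of b] that by auto
    then show ?thesis using \<iota>[OF lsS] that ss_def by auto
  qed
  have Adom: "A b i \<subseteq> dom (\<alpha> (ss i))" for b i
  proof
    fix z assume "z \<in> A b i"
    then obtain x where x: "x \<in> X" "z = \<phi> (x, b)" "idx x b = i" unfolding A_def by blast
    then show "z \<in> dom (\<alpha> (ss i))" using Aback[OF x(2) x(1) x(3)] by blast
  qed
  have Aimg: "pimg (\<alpha> (ss i)) (A b i) = Pc b i" for b i
  proof -
    have "img (\<alpha> (ss i)) (A b i) = Pc b i"
    proof (rule set_eqI)
      fix y
      show "y \<in> img (\<alpha> (ss i)) (A b i) \<longleftrightarrow> y \<in> Pc b i"
      proof
        assume "y \<in> img (\<alpha> (ss i)) (A b i)"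
        then obtain z where z: "z \<in> A b i" "\<alpha> (ss i) z = Some y" unfolding img_def by blast
        then obtain x where x: "x \<in> X" "z = \<phi> (x, b)" "idx x b = i" unfolding A_def by blast
        then have "\<alpha> (ss i) z = Some x" using Aback[OF x(2) x(1) x(3)] by blast
        then have "y = x" using z(2) by simp
        then show "y \<in> Pc b i" using x Pc_def by blast
      next
        assume "y \<in> Pc b i"
        then have y: "y \<in> X" "idx y b = i" unfolding Pc_def by auto
        then have "\<phi> (y, b) \<in> A b i" "\<alpha> (ss i) (\<phi> (y, b)) = Some y"
          using Aback[OF refl y(1) y(2)] A_def by auto
        then show "y \<in> img (\<alpha> (ss i)) (A b i)" unfolding img_def by blast
      qed
    qed
    then show ?thesis using pimg_img2[OF Adom] by simp
  qed
  have Xcov: "X = (\<Union>i<n. Pc b i)" for b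
    using idx unfolding Pc_def by blast
  have Pdisj: "Pc b i \<inter> Pc b i' = {}" if "i \<noteq> i'" for b i i'
    using that unfolding Pc_def by blast
  have phieq: "x = x' \<and> b = b'" if "\<phi> (x, b) = \<phi> (x', b')" "x \<in> X" "x' \<in> X" for x x' b b'
  proof -
    have "(x, b) \<in> V" "(x', b') \<in> V" using that V_def by auto
    then have "(x, b) = (x', b')" using inj_onD[OF \<phi>(1) that(1)] by blast
    then show ?thesis by simp
  qed
  have Adisj: "A b i \<inter> A b i' = {}" if "i \<noteq> i'" for b i i'
  proof (rule ccontr)
    assume "A b i \<inter> A b i' \<noteq> {}"
    then obtain x x' where x: "x \<in> X" "idx x b = i" "x' \<in> X" "idx x' b = i'" "\<phi> (x, b) = \<phi> (x', b)"
      unfolding A_def by blast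
    then have "x = x'" using phieq by blast
    then show False using x that by simp
  qed
  have ABdisj: "A False i \<inter> A True j = {}" for i j
  proof (rule ccontr)
    assume "A False i \<inter> A True j \<noteq> {}"
    then obtain x x' where x: "x \<in> X" "x' \<in> X" "\<phi> (x, False) = \<phi> (x', True)"
      unfolding A_def by blast
    then show False using phieq by blast
  qed
  have c1: "\<forall>i<n. ss i \<in> S \<and> A False i \<subseteq> X \<and> A False i \<subseteq> dom (\<alpha> (ss i))" using ssS AX Adom by blast
  have c2: "\<forall>j<n. ss j \<in> S \<and> A True j \<subseteq> X \<and> A True j \<subseteq> dom (\<alpha> (ss j))" using ssS AX Adom by blast
  have c3: "X = (\<Union>i<n. pimg (\<alpha> (ss i)) (A False i))" using Xcov Aimg by simp
  have c4: "X = (\<Union>i<n. pimg (\<alpha> (ss i)) (A True i))" using Xcov Aimg by simp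
  have c5: "\<forall>i<n. \<forall>i'<n. i \<noteq> i' \<longrightarrow> pimg (\<alpha> (ss i)) (A False i) \<inter> pimg (\<alpha> (ss i')) (A False i') = {}"
    using Aimg Pdisj by simp
  have c6: "\<forall>i<n. \<forall>i'<n. i \<noteq> i' \<longrightarrow> pimg (\<alpha> (ss i)) (A True i) \<inter> pimg (\<alpha> (ss i')) (A True i') = {}"
    using Aimg Pdisj by simp
  have c7: "(\<Union>i<n. A False i) \<union> (\<Union>j<n. A True j) \<subseteq> X" using AX by blast
  have c8: "\<forall>i<n. \<forall>i'<n. i \<noteq> i' \<longrightarrow> A False i \<inter> A False i' = {}" using Adisj by blast
  have c9: "\<forall>i<n. \<forall>i'<n. i \<noteq> i' \<longrightarrow> A True i \<inter> A True i' = {}" using Adisj by blast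
  have c10: "\<forall>i<n. \<forall>j<n. A False i \<inter> A True j = {}" using ABdisj by blast
  show ?thesis
    unfolding paradoxical_def
    apply (rule exI[of _ n], rule exI[of _ n], rule exI[of _ "A False"], rule exI[of _ "A True"], rule exI[of _ ss], rule exI[of _ ss])
    apply (intro conjI)
    apply (fact c1)
    apply (fact c2)
    apply (fact c3)
    apply (fact c5)
    apply (fact c4)
    apply (fact c6)
    apply (fact c7)
    apply (fact c8)
    apply (fact c9)
    by (fact c10)
qed

end

theorem mainTheorem4:
  fixes S :: "'s set" and m :: "'s \<Rightarrow> 's \<Rightarrow> 's" and e :: 's
    and X :: "'x set" and \<alpha> :: "'s \<Rightarrow> 'x \<Rightarrow> 'x option"
  assumes "inverse_monoid S m e"
    and "countable S"
    and "representation S m e X \<alpha>"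
  shows "(domain_measurable S X \<alpha> X \<longleftrightarrow> \<not> paradoxical S X \<alpha> X)
       \<and> (\<not> paradoxical S X \<alpha> X \<longleftrightarrow> domain_folner S \<alpha> X)"
proof -
  have st: "setting S m e X \<alpha>" using assms(1,3) by (rule setting.intro)
  have 1: "domain_measurable S X \<alpha> X \<Longrightarrow> \<not> paradoxical S X \<alpha> X"
    by (rule measurable_not_paradoxical)
  have 2: "domain_folner S \<alpha> X \<Longrightarrow> domain_measurable S X \<alpha> X"
    by (rule setting.folner_measurable[OF st])
  have 3: "paradoxical S X \<alpha> X" if nf: "\<not> domain_folner S \<alpha> X"
  proof -
    have "\<exists>K \<epsilon>. finite K \<and> K \<subseteq> S \<and> \<epsilon> > 0 \<and>
       (\<forall>F. finite F \<and> F \<noteq> {} \<and> F \<subseteq> X \<longrightarrow> (\<exists>s\<in>K. real (card (img (\<alpha> s) F - F)) > \<epsilon> * real (card F)))"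
      by (rule setting.not_folner_K[OF st assms(2) nf])
    then obtain K \<epsilon> where K: "finite K" "K \<subseteq> S" "\<epsilon> > 0"
      "\<forall>F. finite F \<and> F \<noteq> {} \<and> F \<subseteq> X \<longrightarrow> (\<exists>s\<in>K. real (card (img (\<alpha> s) F - F)) > \<epsilon> * real (card F))"
      apply (elim exE conjE) apply (rule that) by assumption+
    have "\<exists>L. finite L \<and> L \<subseteq> S \<and> (\<forall>F. finite F \<and> F \<subseteq> X \<longrightarrow> 2 * card F \<le> card (nbh \<alpha> L F))"
      by (rule setting.expansion[OF st K])
    then obtain L where L: "finite L" "L \<subseteq> S" "\<forall>F. finite F \<and> F \<subseteq> X \<longrightarrow> 2 * card F \<le> card (nbh \<alpha> L F)"
      apply (elim exE conjE) apply (rule that) by assumption+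
    show ?thesis by (rule setting.expansion_paradoxical[OF st L])
  qed
  show ?thesis using 1 2 3 by blast
qed



end
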